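(* Let $H$ be the graph consisting of three vertex-disjoint copies of $K_{4,4}$. Then the complement $\overline{H}$ is not a $2$-AND-PCG.
   Context: All trees are unrooted with edges weighted by nonnegative reals; $d_T(u,v)$ is the weight of the path between leaves $u,v$ of $T$. A graph $G$ is a PCG if there exist a tree $T$ with leaf set $V(G)$ and an interval $I$ of nonnegative reals such that $\{u,v\}\in E(G)$ iff $d_T(u,v)\in I$. A graph $G=(V,E)$ is a $k$-AND-PCG if there exist $k$ PCGs $G_1,\ldots,G_k$ on vertex set $V$ with $E=\bigcap_i E(G_i)$. *)

theory Defs
  imports Complex_Main
begin

definition consec_edges :: "'n list \<Rightarrow> 'n set list" where
  "consec_edges p = map (\<lambda>(a,b). {a,b}) (zip p (tl p))"

definition is_path :: "'n set set \<Rightarrow> 'n list \<Rightarrow> 'n \<Rightarrow> 'n \<Rightarrow> bool" where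
  "is_path Et p u v \<longleftrightarrow> p \<noteq> [] \<and> hd p = u \<and> last p = v \<and> distinct p \<and>
     set (consec_edges p) \<subseteq> Et"

definition is_cycle :: "'n set set \<Rightarrow> 'n list \<Rightarrow> bool" where
  "is_cycle Et c \<longleftrightarrow> length c \<ge> 3 \<and> distinct c \<and> set (consec_edges c) \<subseteq> Et \<and>
     {last c, hd c} \<in> Et"

definition is_tree :: "'n set \<Rightarrow> 'n set set \<Rightarrow> bool" where
  "is_tree Vt Et \<longleftrightarrow> finite Vt \<and> Vt \<noteq> {} \<and>
     Et \<subseteq> {{a,b} | a b. a \<in> Vt \<and> b \<in> Vt \<and> a \<noteq> b} \<and>
     (\<forall>u\<in>Vt. \<forall>v\<in>Vt. \<exists>p. is_path Et p u v) \<and>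
     \<not> (\<exists>c. is_cycle Et c)"

definition tree_leaves :: "'n set \<Rightarrow> 'n set set \<Rightarrow> 'n set" where
  "tree_leaves Vt Et = {v \<in> Vt. card {u \<in> Vt. {u,v} \<in> Et} = 1}"

definition path_weight :: "('n set \<Rightarrow> real) \<Rightarrow> 'n list \<Rightarrow> real" where
  "path_weight w p = sum_list (map w (consec_edges p))"

definition tree_dist :: "'n set set \<Rightarrow> ('n set \<Rightarrow> real) \<Rightarrow> 'n \<Rightarrow> 'n \<Rightarrow> real" where
  "tree_dist Et w u v = path_weight w (THE p. is_path Et p u v)"

definition real_interval :: "real set \<Rightarrow> bool" where
  "real_interval I \<longleftrightarrow> (\<forall>x\<in>I. \<forall>z\<in>I. \<forall>y. x \<le> y \<and> y \<le> z \<longrightarrow> y \<in> I)"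

definition all_pairs :: "'a set \<Rightarrow> 'a set set" where
  "all_pairs V = {{u,v} | u v. u \<in> V \<and> v \<in> V \<and> u \<noteq> v}"

definition is_PCG :: "'a set \<Rightarrow> 'a set set \<Rightarrow> bool" where
  "is_PCG V E \<longleftrightarrow> E \<subseteq> all_pairs V \<and>
    (\<exists>(Vt :: nat set) Et w (f :: 'a \<Rightarrow> nat) (I :: real set).
       is_tree Vt Et \<and> (\<forall>e\<in>Et. w e \<ge> 0) \<and>
       bij_betw f V (tree_leaves Vt Et) \<and>
       real_interval I \<and> I \<subseteq> {0..} \<and>
       (\<forall>u\<in>V. \<forall>v\<in>V. u \<noteq> v \<longrightarrow> ({u,v} \<in> E \<longleftrightarrow> tree_dist Et w (f u) (f v) \<in> I)))"

definition is_k_AND_PCG :: "nat \<Rightarrow> 'a set \<Rightarrow> 'a set set \<Rightarrow> bool" where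
  "is_k_AND_PCG k V E \<longleftrightarrow>
    (\<exists>Es :: nat \<Rightarrow> 'a set set. (\<forall>i<k. is_PCG V (Es i)) \<and> E = (\<Inter>i\<in>{..<k}. Es i))"

text \<open>Vertex (c, s, i): copy c in {0,1,2}, side s, index i in {0..3}.\<close>
definition H3_V :: "(nat \<times> bool \<times> nat) set" where
  "H3_V = {0..<3} \<times> UNIV \<times> {0..<4}"

definition H3_E :: "(nat \<times> bool \<times> nat) set set" where
  "H3_E = {{(c, s, i), (c, \<not> s, j)} | c s i j. c < 3 \<and> i < 4 \<and> j < 4}"

definition H3_compl_E :: "(nat \<times> bool \<times> nat) set set" where
  "H3_compl_E = all_pairs H3_V - H3_E"

end

theory Submission
  imports Defs
begin


lemma ce_length[simp]: "length (consec_edges p) = length p - 1"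
  by (simp add: consec_edges_def)

lemma ce_nth: "i < length p - 1 \<Longrightarrow> consec_edges p ! i = {p!i, p!Suc i}"
  by (simp add: consec_edges_def nth_tl)

lemma ce_set: "set (consec_edges p) = {{p!i, p!Suc i} | i. Suc i < length p}"
proof
  show "set (consec_edges p) \<subseteq> {{p!i, p!Suc i} | i. Suc i < length p}"
  proof
    fix e assume "e \<in> set (consec_edges p)"
    then obtain i where i: "i < length (consec_edges p)" "e = consec_edges p ! i"
      by (auto simp: in_set_conv_nth)
    then have "e = {p!i, p!Suc i}" "Suc i < length p" by (auto simp: ce_nth)
    then show "e \<in> {{p!i, p!Suc i} | i. Suc i < length p}" by blast
  qed
  show "{{p!i, p!Suc i} | i. Suc i < length p} \<subseteq> set (consec_edges p)"
  proof
    fix e assume "e \<in> {{p!i, p!Suc i} | i. Suc i < length p}"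
    then obtain i where i: "Suc i < length p" "e = {p!i, p!Suc i}" by blast
    then have "i < length (consec_edges p)" "consec_edges p ! i = e" by (auto simp: ce_nth)
    then show "e \<in> set (consec_edges p)" by (metis nth_mem)
  qed
qed

lemma ce_Cons2[simp]: "consec_edges (a # b # q) = {a,b} # consec_edges (b # q)"
  by (simp add: consec_edges_def)
lemma ce_single[simp]: "consec_edges [a] = []"
  by (simp add: consec_edges_def)
lemma ce_Nil[simp]: "consec_edges [] = []"
  by (simp add: consec_edges_def)

lemma pw_Cons2[simp]: "path_weight w (a # b # q) = w {a,b} + path_weight w (b # q)"
  by (simp add: path_weight_def)
lemma pw_single[simp]: "path_weight w [a] = 0"
  by (simp add: path_weight_def)

lemma ce_rev: "consec_edges (rev p) = rev (consec_edges p)"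
proof (rule nth_equalityI)
  show "length (consec_edges (rev p)) = length (rev (consec_edges p))" by simp
  fix i assume "i < length (consec_edges (rev p))"
  then have i: "i < length p - 1" by simp
  then show "consec_edges (rev p) ! i = rev (consec_edges p) ! i"
    by (simp add: ce_nth rev_nth insert_commute Suc_diff_Suc)
qed

lemma pw_rev: "path_weight w (rev p) = path_weight w p"
  by (simp add: path_weight_def ce_rev rev_map[symmetric] sum_list_rev)

lemma path_rev: "is_path E p u v \<Longrightarrow> is_path E (rev p) v u"
  by (simp add: is_path_def ce_rev hd_rev last_rev)

lemma ce_take: "set (consec_edges (take m q)) \<subseteq> set (consec_edges q)"
  by (auto simp: ce_set)
lemma ce_drop: "set (consec_edges (drop m q)) \<subseteq> set (consec_edges q)"
  by (auto simp: ce_set)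

lemma distinct_hd_last: "distinct p \<Longrightarrow> 2 \<le> length p \<Longrightarrow> hd p \<noteq> last p"
proof -
  assume d: "distinct p" and l: "2 \<le> length p"
  then have ne: "p \<noteq> []" by auto
  have "p ! 0 \<noteq> p ! (length p - 1)"
  proof
    assume "p ! 0 = p ! (length p - 1)"
    moreover have a: "0 < length p" "length p - 1 < length p" using l by auto
    ultimately have "0 = length p - 1" using nth_eq_iff_index_eq[OF d a] by blast
    then show False using l by simp
  qed
  then show ?thesis using ne by (simp add: hd_conv_nth last_conv_nth)
qed

lemma path_same: "is_path E p u u \<Longrightarrow> p = [u]"
proof -
  assume P: "is_path E p u u"
  then have ne: "p \<noteq> []" and d: "distinct p" and h: "hd p = last p" by (auto simp: is_path_def)
  have "\<not> 2 \<le> length p" using distinct_hd_last[OF d] h by blast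
  moreover have "length p \<noteq> 0" using ne by simp
  ultimately have "length p = 1" by linarith
  then show ?thesis using P by (cases p) (auto simp: is_path_def)
qed

lemma path_verts: "is_path E p u v \<Longrightarrow> x \<in> set p \<Longrightarrow> x = u \<or> (\<exists>e\<in>E. x \<in> e)"
proof -
  assume P: "is_path E p u v" and x: "x \<in> set p"
  then obtain i where i: "i < length p" "x = p ! i" by (auto simp: in_set_conv_nth)
  show ?thesis
  proof (cases i)
    case 0 then show ?thesis using P i by (simp add: is_path_def hd_conv_nth[symmetric])
  next
    case (Suc j)
    then have "{p!j, p!Suc j} \<in> E" using P i unfolding is_path_def ce_set by blast
    moreover have "x \<in> {p!j, p!Suc j}" using i Suc by simp
    ultimately show ?thesis by blast
  qed
qed



lemma finite_all_pairs: "finite V \<Longrightarrow> finite (all_pairs V)"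
  by (rule finite_subset[of _ "Pow V"]) (auto simp: all_pairs_def)

lemma all_pairs_mem: "e \<in> all_pairs V \<Longrightarrow> \<exists>a b. e = {a,b} \<and> a \<in> V \<and> b \<in> V \<and> a \<noteq> b"
  by (auto simp: all_pairs_def)

lemma pair_in_all_pairs_neq: "{a,b} \<in> all_pairs V \<Longrightarrow> a \<noteq> b \<and> a \<in> V \<and> b \<in> V"
  by (auto simp: all_pairs_def doubleton_eq_iff)

lemma cycle_mono: "is_cycle S c \<Longrightarrow> S \<subseteq> S' \<Longrightarrow> is_cycle S' c"
  by (auto simp: is_cycle_def)

lemma leaf_exists:
  assumes fin: "finite V" and sub: "S \<subseteq> all_pairs V" and ne: "S \<noteq> {}"
    and acyc: "\<not> (\<exists>c. is_cycle S c)"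
  shows "\<exists>l\<in>V. \<exists>p. {u\<in>V. {u,l}\<in>S} = {p}"
proof -
  define P where "P = {q. q \<noteq> [] \<and> distinct q \<and> set q \<subseteq> V \<and> set (consec_edges q) \<subseteq> S}"
  have "P \<subseteq> {q. set q \<subseteq> V \<and> length q \<le> card V}"
  proof
    fix q assume "q \<in> P"
    then have "distinct q" "set q \<subseteq> V" by (auto simp: P_def)
    then have "length q \<le> card V" using fin by (metis card_mono distinct_card)
    then show "q \<in> {q. set q \<subseteq> V \<and> length q \<le> card V}" using \<open>set q \<subseteq> V\<close> by simp
  qed
  then have finP: "finite P" using finite_lists_length_le[OF fin] finite_subset by blast
  obtain e where e: "e \<in> S" using ne by blast
  then obtain a b where ab: "e = {a,b}" "a \<in> V" "b \<in> V" "a \<noteq> b" using sub all_pairs_mem by blast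
  have abP: "[a,b] \<in> P" using ab e by (auto simp: P_def)
  define m where "m = Max (length ` P)"
  have "m \<in> length ` P" unfolding m_def using finP abP by (intro Max_in) auto
  then obtain q where qP: "q \<in> P" and qm: "length q = m" by auto
  have qmax: "\<And>q'. q' \<in> P \<Longrightarrow> length q' \<le> length q"
    unfolding qm m_def using finP by (intro Max_ge) auto
  have n2: "2 \<le> length q" using qmax[OF abP] by simp
  define n where "n = length q"
  define x where "x = q ! (n - 1)"
  define y where "y = q ! (n - 2)"
  have q: "q \<noteq> []" "distinct q" "set q \<subseteq> V" "set (consec_edges q) \<subseteq> S" using qP by (auto simp: P_def)
  have lastq: "last q = x" unfolding x_def n_def using q(1) by (simp add: last_conv_nth)
  have "{q ! (n-2), q ! Suc (n-2)} \<in> set (consec_edges q)"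
    unfolding ce_set using n2 n_def by auto
  moreover have "Suc (n-2) = n - 1" using n2 n_def by simp
  ultimately have yx: "{y, x} \<in> S" using q(4) unfolding x_def y_def by auto
  have xV: "x \<in> V" using q n2 unfolding x_def n_def by (auto intro: nth_mem)
  have yV: "y \<in> V" using q n2 unfolding y_def n_def by (auto intro: nth_mem)
  have "{u\<in>V. {u,x}\<in>S} = {y}"
  proof (rule ccontr)
    assume "{u\<in>V. {u,x}\<in>S} \<noteq> {y}"
    then obtain z where z: "z \<in> V" "{z,x} \<in> S" "z \<noteq> y" using yx yV by blast
    have A: "{z,x} \<in> all_pairs V" using z(2) sub by blast
    have zx: "z \<noteq> x" using pair_in_all_pairs_neq[OF A] by blast
    show False
    proof (cases "z \<in> set q")
      case False
      have "q @ [z] \<in> P"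
      proof -
        have "set (consec_edges (q @ [z])) \<subseteq> S"
        proof
          fix f assume "f \<in> set (consec_edges (q @ [z]))"
          then obtain i where i: "Suc i < Suc n" "f = {(q@[z])!i, (q@[z])!Suc i}"
            unfolding ce_set n_def by auto
          show "f \<in> S"
          proof (cases "Suc i < n")
            case True
            then have "f = {q!i, q!Suc i}" using i by (simp add: nth_append n_def)
            then show ?thesis using True q(4) unfolding ce_set n_def by blast
          next
            case False
            then have "i = n - 1" using i by simp
            have lt: "n - 1 < length q" using n2 unfolding n_def by simp
            have e1: "(q@[z]) ! i = x" unfolding \<open>i = n - 1\<close> x_def using nth_append_left[OF lt] by simp
            have "Suc i = length q" using \<open>i = n - 1\<close> n2 unfolding n_def by simp
            then have e2: "(q@[z]) ! Suc i = z" by simp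
            have "f = {x, z}" using i(2) e1 e2 by simp
            then show ?thesis using z(2) by (simp add: insert_commute)
          qed
        qed
        then show ?thesis using q False z(1) by (auto simp: P_def)
      qed
      then show False using qmax by fastforce
    next
      case True
      then obtain i where i: "i < n" "q ! i = z" unfolding n_def by (auto simp: in_set_conv_nth)
      have "i \<noteq> n - 1" using i zx unfolding x_def by auto
      moreover have "i \<noteq> n - 2" using i z(3) unfolding y_def by auto
      ultimately have i3: "i + 3 \<le> n" using i by linarith
      define c where "c = drop i q"
      have "is_cycle S c"
        unfolding is_cycle_def
      proof (intro conjI)
        show "3 \<le> length c" using i3 unfolding c_def n_def by simp
        show "distinct c" using q(2) unfolding c_def by simp
        show "set (consec_edges c) \<subseteq> S" using q(4) ce_drop unfolding c_def by blast
        have "hd c = z" using i unfolding c_def n_def by (simp add: hd_drop_conv_nth)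
        moreover have "last c = x" using i lastq unfolding c_def n_def by simp
        ultimately show "{last c, hd c} \<in> S" using z(2) by (simp add: insert_commute)
      qed
      then show False using acyc by blast
    qed
  qed
  then show ?thesis using xV by blast
qed

lemma forest_card:
  assumes "finite V" "S \<subseteq> all_pairs V" "\<not> (\<exists>c. is_cycle S c)" "V \<noteq> {}"
  shows "card S < card V"
  using assms
proof (induction "card V" arbitrary: V S rule: less_induct)
  case less
  show ?case
  proof (cases "S = {}")
    case True
    then show ?thesis using less.prems by (simp add: card_gt_0_iff)
  next
    case False
    obtain l p where l: "l \<in> V" and N: "{u\<in>V. {u,l}\<in>S} = {p}"
      using leaf_exists[OF less.prems(1,2) False less.prems(3)] by blast
    have pl: "{p,l} \<in> S" "p \<in> V" using N by auto
    have A: "{p,l} \<in> all_pairs V" using pl less.prems(2) by blast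
    have pnl: "p \<noteq> l" using pair_in_all_pairs_neq[OF A] by blast
    define S' where "S' = S - {{p,l}}"
    define V' where "V' = V - {l}"
    have sub': "S' \<subseteq> all_pairs V'"
    proof
      fix e assume e: "e \<in> S'"
      then obtain a b where ab: "e = {a,b}" "a \<in> V" "b \<in> V" "a \<noteq> b"
        using less.prems(2) all_pairs_mem unfolding S'_def by blast
      have "a \<noteq> l"
      proof
        assume "a = l"
        then have "{b,l} \<in> S" using e ab unfolding S'_def by (auto simp: insert_commute)
        then have "b = p" using N ab by blast
        then show False using e ab \<open>a = l\<close> unfolding S'_def by (auto simp: insert_commute)
      qed
      moreover have "b \<noteq> l"
      proof
        assume "b = l"
        then have "{a,l} \<in> S" using e ab unfolding S'_def by auto
        then have "a = p" using N ab by blast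
        then show False using e ab \<open>b = l\<close> unfolding S'_def by auto
      qed
      ultimately show "e \<in> all_pairs V'" using ab unfolding V'_def all_pairs_def by blast
    qed
    have ac': "\<not> (\<exists>c. is_cycle S' c)" using less.prems(3) cycle_mono unfolding S'_def by blast
    have V'ne: "V' \<noteq> {}" using pl pnl unfolding V'_def by blast
    have cV: "card V' < card V" unfolding V'_def by (rule card_Diff1_less[OF less.prems(1) l])
    have IH: "card S' < card V'"
      using less.hyps[OF cV _ sub' ac' V'ne] less.prems(1) unfolding V'_def by simp
    have finS: "finite S" using finite_subset[OF less.prems(2) finite_all_pairs[OF less.prems(1)]] .
    have "card S = Suc (card S')" unfolding S'_def using card.remove[OF finS pl(1)] .
    moreover have "card V = Suc (card V')" unfolding V'_def using card.remove[OF less.prems(1) l] .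
    ultimately show ?thesis using IH by simp
  qed
qed



lemma ce_mem: "Suc i < length q \<Longrightarrow> {q!i, q!Suc i} \<in> set (consec_edges q)"
  unfolding ce_set by blast

lemma tree_sub: "is_tree Vt Et \<Longrightarrow> Et \<subseteq> all_pairs Vt"
  unfolding is_tree_def all_pairs_def by blast

lemma tree_conn: "is_tree Vt Et \<Longrightarrow> u \<in> Vt \<Longrightarrow> v \<in> Vt \<Longrightarrow> \<exists>q. is_path Et q u v"
  unfolding is_tree_def by blast

lemma path_avoid:
  assumes P: "is_path E q u v" and ul: "u \<noteq> l" and vl: "v \<noteq> l"
    and N: "\<forall>e\<in>E. l \<in> e \<longrightarrow> e = {l,p}"
  shows "l \<notin> set q"
proof
  assume "l \<in> set q"
  then obtain i where i: "i < length q" "q ! i = l" by (auto simp: in_set_conv_nth)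
  have q: "q \<noteq> []" "hd q = u" "last q = v" "distinct q" "set (consec_edges q) \<subseteq> E"
    using P by (auto simp: is_path_def)
  have h0: "q ! 0 = u" using hd_conv_nth[OF q(1)] q(2) by simp
  have hl: "q ! (length q - 1) = v" using last_conv_nth[OF q(1)] q(3) by simp
  have "i \<noteq> 0" using i(2) h0 ul by metis
  moreover have "i \<noteq> length q - 1" using i(2) hl vl by metis
  ultimately have i1: "0 < i" "Suc i < length q" using i by auto
  have "Suc (i-1) < length q" using i1 by simp
  then have e1: "{q!(i-1), q!Suc (i-1)} \<in> E" using q(5) ce_mem by blast
  have e2: "{q!i, q!Suc i} \<in> E" using q(5) i1(2) ce_mem by blast
  have s: "Suc (i-1) = i" using i1 by simp
  have d1: "q!(i-1) \<noteq> l" using q(4) i i1 nth_eq_iff_index_eq[OF q(4), of "i-1" i] by auto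
  have d2: "q!Suc i \<noteq> l" using q(4) i i1 nth_eq_iff_index_eq[OF q(4), of "Suc i" i] by auto
  have "{q!(i-1), l} = {l,p}" using N e1 s i(2) by auto
  then have a1: "q!(i-1) = p" using d1 by (auto simp: doubleton_eq_iff)
  have "{l, q!Suc i} = {l,p}" using N e2 i(2) by auto
  then have a2: "q!Suc i = p" using d2 by (auto simp: doubleton_eq_iff)
  have "i - 1 = Suc i" using nth_eq_iff_index_eq[OF q(4), of "i-1" "Suc i"] a1 a2 i1 by auto
  then show False by simp
qed

lemma path_restrict:
  assumes P: "is_path E q u v" and nl: "l \<notin> set q"
  shows "is_path (E - {{l,p}}) q u v"
proof -
  have "set (consec_edges q) \<subseteq> E - {{l,p}}"
  proof
    fix e assume e: "e \<in> set (consec_edges q)"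
    then obtain i where i: "Suc i < length q" "e = {q!i, q!Suc i}" unfolding ce_set by blast
    have "q!i \<in> set q" "q!Suc i \<in> set q" using i by auto
    then have "l \<notin> e" using nl i by auto
    then show "e \<in> E - {{l,p}}" using e P by (auto simp: is_path_def)
  qed
  then show ?thesis using P by (auto simp: is_path_def)
qed

lemma path_from_leaf:
  assumes P: "is_path E q l z" and zl: "z \<noteq> l" and N: "\<forall>e\<in>E. l \<in> e \<longrightarrow> e = {l,p}"
  shows "\<exists>r. q = l # p # r \<and> is_path (E - {{l,p}}) (p # r) p z"
proof -
  have q: "q \<noteq> []" "hd q = l" "last q = z" "distinct q" "set (consec_edges q) \<subseteq> E"
    using P by (auto simp: is_path_def)
  obtain b r where qb: "q = l # b # r"
  proof (cases q)
    case Nil then show ?thesis using q by simp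
  next
    case (Cons a t)
    then have al: "a = l" using q by simp
    show ?thesis
    proof (cases t)
      case Nil then show ?thesis using Cons q zl al by simp
    next
      case (Cons b r) then show ?thesis using \<open>q = a # t\<close> al that by simp
    qed
  qed
  have "{l,b} \<in> E" using q(5) qb by simp
  then have "{l,b} = {l,p}" using N by auto
  moreover have "b \<noteq> l" using q(4) qb by auto
  ultimately have bp: "b = p" by (auto simp: doubleton_eq_iff)
  have P2: "is_path E (p # r) p z" using q qb bp by (auto simp: is_path_def)
  have "l \<notin> set (p # r)" using q(4) qb bp by auto
  then show ?thesis using path_restrict[OF P2] qb bp by blast
qed

lemma tree_decomp:
  assumes T: "is_tree Vt Et" and c2: "2 \<le> card Vt"
  shows "\<exists>l p. l \<in> Vt \<and> p \<in> Vt \<and> l \<noteq> p \<and> {l,p} \<in> Et \<and> (\<forall>e\<in>Et. l \<in> e \<longrightarrow> e = {l,p})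
           \<and> is_tree (Vt - {l}) (Et - {{l,p}})"
proof -
  have fin: "finite Vt" and sub: "Et \<subseteq> all_pairs Vt" and ac: "\<not> (\<exists>c. is_cycle Et c)"
    using T tree_sub by (auto simp: is_tree_def)
  obtain u v where uv: "u \<in> Vt" "v \<in> Vt" "u \<noteq> v"
  proof -
    obtain u where u: "u \<in> Vt" using c2 by fastforce
    have "card (Vt - {u}) \<ge> 1" using c2 fin u by simp
    then have "Vt - {u} \<noteq> {}" by (metis card.empty not_one_le_zero)
    then obtain v where "v \<in> Vt - {u}" by blast
    then show ?thesis using u that by blast
  qed
  obtain q where q: "is_path Et q u v" using tree_conn[OF T uv(1,2)] by blast
  have "2 \<le> length q"
  proof (rule ccontr)
    assume "\<not> 2 \<le> length q"
    moreover have "length q \<noteq> 0" using q by (simp add: is_path_def)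
    ultimately have "length q = 1" by linarith
    then have hl: "hd q = last q" by (cases q) auto
    have "hd q = u" "last q = v" using q by (auto simp: is_path_def)
    then show False using uv(3) hl by simp
  qed
  then have "{q!0, q!Suc 0} \<in> set (consec_edges q)" unfolding ce_set by auto
  then have ne: "Et \<noteq> {}" using q by (auto simp: is_path_def)
  obtain l p where l: "l \<in> Vt" and N: "{u\<in>Vt. {u,l}\<in>Et} = {p}"
    using leaf_exists[OF fin sub ne ac] by blast
  have pl: "{p,l} \<in> Et" "p \<in> Vt" using N by auto
  have A: "{p,l} \<in> all_pairs Vt" using pl sub by blast
  have pnl: "p \<noteq> l" using pair_in_all_pairs_neq[OF A] by blast
  have NN: "\<forall>e\<in>Et. l \<in> e \<longrightarrow> e = {l,p}"
  proof (intro ballI impI)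
    fix e assume e: "e \<in> Et" "l \<in> e"
    then obtain a b where ab: "e = {a,b}" "a \<in> Vt" "b \<in> Vt" "a \<noteq> b" using sub all_pairs_mem by blast
    show "e = {l,p}"
    proof (cases "a = l")
      case True
      then have "{b,l} \<in> Et" using e ab by (simp add: insert_commute)
      then have "b = p" using N ab by blast
      then show ?thesis using ab True by simp
    next
      case False
      then have "b = l" using e ab by auto
      then have "{a,l} \<in> Et" using e ab by simp
      then have "a = p" using N ab by blast
      then show ?thesis using ab \<open>b = l\<close> by (simp add: insert_commute)
    qed
  qed
  have T': "is_tree (Vt - {l}) (Et - {{l,p}})"
    unfolding is_tree_def
  proof (intro conjI)
    show "finite (Vt - {l})" using fin by simp
    show "Vt - {l} \<noteq> {}" using pl pnl by blast
    show "Et - {{l, p}} \<subseteq> {{a, b} |a b. a \<in> Vt - {l} \<and> b \<in> Vt - {l} \<and> a \<noteq> b}"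
    proof
      fix e assume e: "e \<in> Et - {{l,p}}"
      then obtain a b where ab: "e = {a,b}" "a \<in> Vt" "b \<in> Vt" "a \<noteq> b" using sub all_pairs_mem by blast
      have "l \<notin> e" using e NN by blast
      then show "e \<in> {{a, b} |a b. a \<in> Vt - {l} \<and> b \<in> Vt - {l} \<and> a \<noteq> b}" using ab by blast
    qed
    show "\<forall>u\<in>Vt - {l}. \<forall>v\<in>Vt - {l}. \<exists>p'. is_path (Et - {{l, p}}) p' u v"
    proof (intro ballI)
      fix u v assume u: "u \<in> Vt - {l}" and v: "v \<in> Vt - {l}"
      obtain q where q: "is_path Et q u v" using tree_conn[OF T] u v by blast
      have "l \<notin> set q" using path_avoid[OF q _ _ NN] u v by blast
      then show "\<exists>p'. is_path (Et - {{l, p}}) p' u v" using path_restrict[OF q] by blast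
    qed
    show "\<not> (\<exists>c. is_cycle (Et - {{l, p}}) c)" using ac cycle_mono[of "Et - {{l,p}}" _ Et] by blast
  qed
  have lp: "{l,p} \<in> Et" using pl(1) insert_commute[of l p "{}"] by simp
  have lnp: "l \<noteq> p" using pnl by simp
  show ?thesis
    apply (rule exI[of _ l], rule exI[of _ p])
    by (intro conjI l pl(2) lnp lp NN T')
qed

lemma card2: "finite V \<Longrightarrow> u \<in> V \<Longrightarrow> v \<in> V \<Longrightarrow> u \<noteq> v \<Longrightarrow> 2 \<le> card V"
  using card_mono[of V "{u,v}"] by simp

lemma tree_unique:
  assumes "is_tree Vt Et" "u \<in> Vt" "v \<in> Vt" "is_path Et q1 u v" "is_path Et q2 u v"
  shows "q1 = q2"
  using assms
proof (induction "card Vt" arbitrary: Vt Et u v q1 q2 rule: less_induct)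
  case less
  show ?case
  proof (cases "u = v")
    case True
    then show ?thesis using less.prems path_same by metis
  next
    case False
    have fin: "finite Vt" using less.prems(1) by (simp add: is_tree_def)
    have c2: "2 \<le> card Vt" using card2[OF fin less.prems(2,3) False] .
    obtain l p where l: "l \<in> Vt" "p \<in> Vt" "l \<noteq> p" "{l,p} \<in> Et"
      and NN: "\<forall>e\<in>Et. l \<in> e \<longrightarrow> e = {l,p}" and T': "is_tree (Vt - {l}) (Et - {{l,p}})"
      using tree_decomp[OF less.prems(1) c2] by blast
    have cV: "card (Vt - {l}) < card Vt" by (rule card_Diff1_less[OF fin l(1)])
    have leafcase: "r1 = r2" if R1: "is_path Et r1 l z" and R2: "is_path Et r2 l z" and zV: "z \<in> Vt" and zl: "z \<noteq> l" for r1 r2 z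
    proof -
      obtain s1 where s1: "r1 = l # p # s1" "is_path (Et - {{l,p}}) (p # s1) p z"
        using path_from_leaf[OF R1 zl NN] by blast
      obtain s2 where s2: "r2 = l # p # s2" "is_path (Et - {{l,p}}) (p # s2) p z"
        using path_from_leaf[OF R2 zl NN] by blast
      have "p # s1 = p # s2"
        using less.hyps[OF cV T' _ _ s1(2) s2(2)] l zV zl by blast
      then show ?thesis using s1 s2 by simp
    qed
    show ?thesis
    proof (cases "u = l")
      case True
      then show ?thesis using leafcase less.prems False by blast
    next
      case ul: False
      show ?thesis
      proof (cases "v = l")
        case True
        have r1: "is_path Et (rev q1) l u" using path_rev[OF less.prems(4)] True by simp
        have r2: "is_path Et (rev q2) l u" using path_rev[OF less.prems(5)] True by simp
        have "rev q1 = rev q2" using leafcase[OF r1 r2 less.prems(2) ul] .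
        then show ?thesis by simp
      next
        case vl: False
        have a1: "l \<notin> set q1" using path_avoid[OF less.prems(4) ul vl NN] .
        have a2: "l \<notin> set q2" using path_avoid[OF less.prems(5) ul vl NN] .
        show ?thesis
          using less.hyps[OF cV T' _ _ path_restrict[OF less.prems(4) a1] path_restrict[OF less.prems(5) a2]]
            less.prems(2,3) ul vl by blast
      qed
    qed
  qed
qed

lemma tree_dist_eq:
  assumes "is_tree Vt Et" "u \<in> Vt" "v \<in> Vt" "is_path Et q u v"
  shows "tree_dist Et w u v = path_weight w q"
proof -
  have "(THE p. is_path Et p u v) = q"
  proof (rule the_equality)
    show "is_path Et q u v" by fact
    fix p assume "is_path Et p u v"
    then show "p = q" using tree_unique[OF assms(1-3) _ assms(4)] by blast
  qed
  then show ?thesis by (simp add: tree_dist_def)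
qed



lemma tree_zero: "is_tree Vt Et \<Longrightarrow> u \<in> Vt \<Longrightarrow> tree_dist Et w u u = 0"
proof -
  assume T: "is_tree Vt Et" and u: "u \<in> Vt"
  have "is_path Et [u] u u" by (simp add: is_path_def)
  then show ?thesis using tree_dist_eq[OF T u u] by simp
qed

lemma tree_sym: "is_tree Vt Et \<Longrightarrow> u \<in> Vt \<Longrightarrow> v \<in> Vt \<Longrightarrow> tree_dist Et w u v = tree_dist Et w v u"
proof -
  assume T: "is_tree Vt Et" and u: "u \<in> Vt" and v: "v \<in> Vt"
  obtain q where q: "is_path Et q u v" using tree_conn[OF T u v] by blast
  have "tree_dist Et w u v = path_weight w q" using tree_dist_eq[OF T u v q] .
  moreover have "tree_dist Et w v u = path_weight w (rev q)" using tree_dist_eq[OF T v u path_rev[OF q]] .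
  ultimately show ?thesis by (simp add: pw_rev)
qed

lemma tree_nonneg: "is_tree Vt Et \<Longrightarrow> \<forall>e\<in>Et. 0 \<le> w e \<Longrightarrow> u \<in> Vt \<Longrightarrow> v \<in> Vt \<Longrightarrow> 0 \<le> tree_dist Et w u v"
proof -
  assume T: "is_tree Vt Et" and W: "\<forall>e\<in>Et. 0 \<le> w e" and u: "u \<in> Vt" and v: "v \<in> Vt"
  obtain q where q: "is_path Et q u v" using tree_conn[OF T u v] by blast
  have "set (consec_edges q) \<subseteq> Et" using q by (simp add: is_path_def)
  then have "0 \<le> path_weight w q" unfolding path_weight_def using W by (intro sum_list_nonneg) auto
  then show ?thesis using tree_dist_eq[OF T u v q] by simp
qed

lemma fpc_degenerate:
  fixes D :: "'a \<Rightarrow> 'a \<Rightarrow> real"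
  assumes sym: "\<forall>x\<in>V. \<forall>y\<in>V. D x y = D y x" and z: "\<forall>x\<in>V. D x x = 0"
    and tri: "\<forall>x\<in>V. \<forall>y\<in>V. \<forall>z\<in>V. D x y \<le> D x z + D z y"
    and V: "a \<in> V" "b \<in> V" "c \<in> V" "d \<in> V" and nd: "\<not> distinct [a,b,c,d]"
  shows "D a b + D c d \<le> max (D a c + D b d) (D a d + D b c)"
proof -
  have s: "\<And>x y. x \<in> V \<Longrightarrow> y \<in> V \<Longrightarrow> D x y = D y x" using sym by blast
  have zz: "\<And>x. x \<in> V \<Longrightarrow> D x x = 0" using z by blast
  have t: "\<And>x y z. x \<in> V \<Longrightarrow> y \<in> V \<Longrightarrow> z \<in> V \<Longrightarrow> D x y \<le> D x z + D z y" using tri by blast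
  have "a = b \<or> a = c \<or> a = d \<or> b = c \<or> b = d \<or> c = d" using nd by auto
  then consider "a = b" | "a = c" | "a = d" | "b = c" | "b = d" | "c = d" by blast
  then show ?thesis
  proof cases
    case 1
    have "D c d \<le> D c a + D a d" using t V by blast
    moreover have "D c a = D a c" using s V by blast
    ultimately have "D a b + D c d \<le> D a c + D b d" using zz V 1 by simp
    then show ?thesis by simp
  next
    case 2
    have "D b a = D a b" using s V by blast
    then have "D a b + D c d \<le> D a d + D b c" using 2 by simp
    then show ?thesis by simp
  next
    case 3
    have "D b a = D a b" "D c a = D a c" using s V by blast+
    then have "D a b + D c d \<le> D a c + D b d" using 3 by simp
    then show ?thesis by simp
  next
    case 4
    then have "D a b + D c d \<le> D a c + D b d" by simp
    then show ?thesis by simp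
  next
    case 5
    have "D c b = D b c" using s V by blast
    then have "D a b + D c d \<le> D a d + D b c" using 5 by simp
    then show ?thesis by simp
  next
    case 6
    have "D a b \<le> D a c + D c b" using t V by blast
    moreover have "D c b = D b c" using s V by blast
    ultimately have "D a b + D c d \<le> D a d + D b c" using zz V 6 by simp
    then show ?thesis by simp
  qed
qed

lemma max_shift: "(X::real) \<le> max Y Z \<Longrightarrow> X + K \<le> max (Y + K) (Z + K)"
  by (simp add: max_def split: if_splits)

lemma tree_metric:
  assumes "is_tree Vt Et" "\<forall>e\<in>Et. 0 \<le> w e"
  shows "(\<forall>u\<in>Vt. \<forall>v\<in>Vt. \<forall>x\<in>Vt. tree_dist Et w u v \<le> tree_dist Et w u x + tree_dist Et w x v) \<and>
    (\<forall>a\<in>Vt. \<forall>b\<in>Vt. \<forall>c\<in>Vt. \<forall>d\<in>Vt. tree_dist Et w a b + tree_dist Et w c d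
       \<le> max (tree_dist Et w a c + tree_dist Et w b d) (tree_dist Et w a d + tree_dist Et w b c))"
  using assms
proof (induction "card Vt" arbitrary: Vt Et rule: less_induct)
  case less
  note T = less.prems(1) and W = less.prems(2)
  define D where "D = tree_dist Et w"
  have fin: "finite Vt" using T by (simp add: is_tree_def)
  have zD: "\<forall>x\<in>Vt. D x x = 0" unfolding D_def using tree_zero[OF T] by blast
  have sD: "\<forall>x\<in>Vt. \<forall>y\<in>Vt. D x y = D y x" unfolding D_def using tree_sym[OF T] by blast
  have nD: "\<forall>x\<in>Vt. \<forall>y\<in>Vt. 0 \<le> D x y" unfolding D_def using tree_nonneg[OF T W] by blast
  show ?case
  proof (cases "card Vt < 2")
    case True
    then have one: "\<forall>a\<in>Vt. \<forall>b\<in>Vt. a = b" using card_le_Suc0_iff_eq[OF fin] by simp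
    have tri: "\<forall>u\<in>Vt. \<forall>v\<in>Vt. \<forall>x\<in>Vt. D u v \<le> D u x + D x v"
      using one zD by (metis order_refl add_0)
    have fpc: "\<forall>a\<in>Vt. \<forall>b\<in>Vt. \<forall>c\<in>Vt. \<forall>d\<in>Vt. D a b + D c d \<le> max (D a c + D b d) (D a d + D b c)"
      using one zD by (metis order_refl add_0 max.idem)
    show ?thesis using tri fpc unfolding D_def by blast
  next
    case False
    then have c2: "2 \<le> card Vt" by simp
    obtain l p where l: "l \<in> Vt" "p \<in> Vt" "l \<noteq> p" "{l,p} \<in> Et"
      and NN: "\<forall>e\<in>Et. l \<in> e \<longrightarrow> e = {l,p}" and T': "is_tree (Vt - {l}) (Et - {{l,p}})"
      using tree_decomp[OF T c2] by blast
    have cV: "card (Vt - {l}) < card Vt" by (rule card_Diff1_less[OF fin l(1)])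
    have W': "\<forall>e\<in>Et - {{l,p}}. 0 \<le> w e" using W by blast
    define D' where "D' = tree_dist (Et - {{l,p}}) w"
    have IH: "(\<forall>u\<in>Vt - {l}. \<forall>v\<in>Vt - {l}. \<forall>x\<in>Vt - {l}. D' u v \<le> D' u x + D' x v) \<and>
      (\<forall>a\<in>Vt - {l}. \<forall>b\<in>Vt - {l}. \<forall>c\<in>Vt - {l}. \<forall>d\<in>Vt - {l}. D' a b + D' c d \<le> max (D' a c + D' b d) (D' a d + D' b c))"
      unfolding D'_def by (rule less.hyps[OF cV T' W'])
    have sD': "\<forall>x\<in>Vt - {l}. \<forall>y\<in>Vt - {l}. D' x y = D' y x" unfolding D'_def using tree_sym[OF T'] by blast
    define Wl where "Wl = w {l,p}"
    have Wl0: "0 \<le> Wl" using W l(4) unfolding Wl_def by blast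
    define phi where "phi x = (if x = l then p else x)" for x
    define del where "del x = (if x = l then Wl else 0)" for x
    have phiV: "\<And>x. x \<in> Vt \<Longrightarrow> phi x \<in> Vt - {l}" unfolding phi_def using l by auto
    have del0: "\<And>x. 0 \<le> del x" unfolding del_def using Wl0 by auto
    have F1: "D x y = D' x y" if x: "x \<in> Vt" "x \<noteq> l" and y: "y \<in> Vt" "y \<noteq> l" for x y
    proof -
      obtain q where q: "is_path Et q x y" using tree_conn[OF T x(1) y(1)] by blast
      have "l \<notin> set q" using path_avoid[OF q x(2) y(2) NN] .
      then have q': "is_path (Et - {{l,p}}) q x y" using path_restrict[OF q] by blast
      have "D x y = path_weight w q" unfolding D_def using tree_dist_eq[OF T x(1) y(1) q] .
      moreover have "D' x y = path_weight w q" unfolding D'_def using tree_dist_eq[OF T' _ _ q'] x y by blast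
      ultimately show ?thesis by simp
    qed
    have F2: "D l y = Wl + D' p y" if y: "y \<in> Vt" "y \<noteq> l" for y
    proof -
      obtain q where q: "is_path Et q l y" using tree_conn[OF T l(1) y(1)] by blast
      obtain r where r: "q = l # p # r" "is_path (Et - {{l,p}}) (p # r) p y"
        using path_from_leaf[OF q y(2) NN] by blast
      have "D l y = path_weight w q" unfolding D_def using tree_dist_eq[OF T l(1) y(1) q] .
      moreover have "D' p y = path_weight w (p # r)" unfolding D'_def using tree_dist_eq[OF T' _ _ r(2)] l y by blast
      ultimately show ?thesis using r(1) unfolding Wl_def by simp
    qed
    have F: "D x y = del x + del y + D' (phi x) (phi y)"
      if x: "x \<in> Vt" and y: "y \<in> Vt" and xy: "x \<noteq> l \<or> y \<noteq> l" for x y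
    proof (cases "x = l")
      case True
      then have yl: "y \<noteq> l" using xy by simp
      show ?thesis using F2[OF y yl] True yl unfolding del_def phi_def by simp
    next
      case xl: False
      show ?thesis
      proof (cases "y = l")
        case True
        have "D x y = D y x" using sD x y by blast
        also have "\<dots> = Wl + D' p x" using F2[OF x xl] True by simp
        also have "D' p x = D' x p" using sD' l x xl by blast
        finally show ?thesis using True xl unfolding del_def phi_def by simp
      next
        case False
        then show ?thesis using F1[OF x xl y False] xl unfolding del_def phi_def by simp
      qed
    qed
    have tri: "\<forall>u\<in>Vt. \<forall>v\<in>Vt. \<forall>x\<in>Vt. D u v \<le> D u x + D x v"
    proof (intro ballI)
      fix u v x assume u: "u \<in> Vt" and v: "v \<in> Vt" and x: "x \<in> Vt"
      show "D u v \<le> D u x + D x v"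
      proof (cases "distinct [u,v,x]")
        case False
        then consider "u = v" | "u = x" | "v = x" by auto
        then show ?thesis
        proof cases
          case 1 then show ?thesis using zD nD u v x by (metis add_nonneg_nonneg)
        next
          case 2 then show ?thesis using zD u by simp
        next
          case 3 then show ?thesis using zD v by simp
        qed
      next
        case True
        have e1: "D u v = del u + del v + D' (phi u) (phi v)" using F u v True by auto
        have e2: "D u x = del u + del x + D' (phi u) (phi x)" using F u x True by auto
        have e3: "D x v = del x + del v + D' (phi x) (phi v)" using F x v True by auto
        have "D' (phi u) (phi v) \<le> D' (phi u) (phi x) + D' (phi x) (phi v)"
          using IH phiV u v x by blast
        then show ?thesis using e1 e2 e3 del0[of x] by linarith
      qed
    qed
    have fpc: "\<forall>a\<in>Vt. \<forall>b\<in>Vt. \<forall>c\<in>Vt. \<forall>d\<in>Vt. D a b + D c d \<le> max (D a c + D b d) (D a d + D b c)"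
    proof (intro ballI)
      fix a b c d assume a: "a \<in> Vt" and b: "b \<in> Vt" and c: "c \<in> Vt" and d: "d \<in> Vt"
      show "D a b + D c d \<le> max (D a c + D b d) (D a d + D b c)"
      proof (cases "distinct [a,b,c,d]")
        case False
        then show ?thesis using fpc_degenerate[OF sD zD tri a b c d] by blast
      next
        case True
        have e1: "D a b = del a + del b + D' (phi a) (phi b)" using F a b True by auto
        have e2: "D c d = del c + del d + D' (phi c) (phi d)" using F c d True by auto
        have e3: "D a c = del a + del c + D' (phi a) (phi c)" using F a c True by auto
        have e4: "D b d = del b + del d + D' (phi b) (phi d)" using F b d True by auto
        have e5: "D a d = del a + del d + D' (phi a) (phi d)" using F a d True by auto
        have e6: "D b c = del b + del c + D' (phi b) (phi c)" using F b c True by auto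
        have "D' (phi a) (phi b) + D' (phi c) (phi d) \<le> max (D' (phi a) (phi c) + D' (phi b) (phi d)) (D' (phi a) (phi d) + D' (phi b) (phi c))"
          using IH phiV a b c d by blast
        then have "D' (phi a) (phi b) + D' (phi c) (phi d) + (del a + del b + del c + del d)
           \<le> max (D' (phi a) (phi c) + D' (phi b) (phi d) + (del a + del b + del c + del d))
                  (D' (phi a) (phi d) + D' (phi b) (phi c) + (del a + del b + del c + del d))"
          by (rule max_shift)
        moreover have "D a b + D c d = D' (phi a) (phi b) + D' (phi c) (phi d) + (del a + del b + del c + del d)"
          using e1 e2 by simp
        moreover have "D a c + D b d = D' (phi a) (phi c) + D' (phi b) (phi d) + (del a + del b + del c + del d)"
          using e3 e4 by simp
        moreover have "D a d + D b c = D' (phi a) (phi d) + D' (phi b) (phi c) + (del a + del b + del c + del d)"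
          using e5 e6 by simp
        ultimately show ?thesis by simp
      qed
    qed
    show ?thesis using tri fpc unfolding D_def by blast
  qed
qed



lemma pcg_metric:
  assumes "is_PCG V E"
  shows "\<exists>D I. real_interval I \<and> (\<forall>u\<in>V. \<forall>v\<in>V. u \<noteq> v \<longrightarrow> ({u,v} \<in> E \<longleftrightarrow> D u v \<in> I))
    \<and> (\<forall>u\<in>V. \<forall>v\<in>V. D u v = D v u)
    \<and> (\<forall>a\<in>V. \<forall>b\<in>V. \<forall>c\<in>V. \<forall>d\<in>V. D a b + D c d \<le> max (D a c + D b d) (D a d + D b c))"
proof -
  obtain Vt Et w f I where T: "is_tree (Vt :: nat set) Et" and W: "\<forall>e\<in>Et. w e \<ge> 0"
    and B: "bij_betw f V (tree_leaves Vt Et)" and RI: "real_interval I"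
    and P: "\<forall>u\<in>V. \<forall>v\<in>V. u \<noteq> v \<longrightarrow> ({u,v} \<in> E \<longleftrightarrow> tree_dist Et w (f u) (f v) \<in> I)"
    using assms unfolding is_PCG_def by blast
  have fV: "\<And>u. u \<in> V \<Longrightarrow> f u \<in> Vt" using bij_betwE[OF B] by (auto simp: tree_leaves_def)
  define D where "D u v = tree_dist Et w (f u) (f v)" for u v
  have M: "\<forall>a\<in>Vt. \<forall>b\<in>Vt. \<forall>c\<in>Vt. \<forall>d\<in>Vt. tree_dist Et w a b + tree_dist Et w c d
       \<le> max (tree_dist Et w a c + tree_dist Et w b d) (tree_dist Et w a d + tree_dist Et w b c)"
    using tree_metric[OF T W] by blast
  have 1: "\<forall>u\<in>V. \<forall>v\<in>V. u \<noteq> v \<longrightarrow> ({u,v} \<in> E \<longleftrightarrow> D u v \<in> I)" using P unfolding D_def by blast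
  have 2: "\<forall>u\<in>V. \<forall>v\<in>V. D u v = D v u" unfolding D_def using tree_sym[OF T] fV by blast
  have 3: "\<forall>a\<in>V. \<forall>b\<in>V. \<forall>c\<in>V. \<forall>d\<in>V. D a b + D c d \<le> max (D a c + D b d) (D a d + D b c)"
  proof (intro ballI)
    fix a b c d assume "a \<in> V" "b \<in> V" "c \<in> V" "d \<in> V"
    then have "f a \<in> Vt" "f b \<in> Vt" "f c \<in> Vt" "f d \<in> Vt" using fV by auto
    then show "D a b + D c d \<le> max (D a c + D b d) (D a d + D b c)" unfolding D_def using M by blast
  qed
  show ?thesis using RI 1 2 3 by blast
qed

lemma hole:
  fixes D :: "'a \<Rightarrow> 'a \<Rightarrow> real" and v :: "nat \<Rightarrow> 'a" and sh :: "'a \<Rightarrow> 'a \<Rightarrow> bool"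
  assumes n4: "4 \<le> n"
    and cmp: "\<And>a b c d. sh a b \<Longrightarrow> \<not> sh c d \<Longrightarrow> D a b < D c d"
    and fpc: "\<And>j. 2 \<le> j \<Longrightarrow> j + 2 \<le> n \<Longrightarrow> D (v 0) (v j) + D (v 1) (v (Suc j))
                \<le> max (D (v 0) (v 1) + D (v j) (v (Suc j))) (D (v 0) (v (Suc j)) + D (v 1) (v j))"
    and s01: "sh (v 0) (v 1)" and s12: "sh (v 1) (v 2)"
    and sj: "\<And>j. 2 \<le> j \<Longrightarrow> j + 2 \<le> n \<Longrightarrow> sh (v j) (v (Suc j))"
    and slast: "sh (v 0) (v (n - 1))"
    and n0: "\<And>j. 2 \<le> j \<Longrightarrow> j + 2 \<le> n \<Longrightarrow> \<not> sh (v 0) (v j)"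
    and n1: "\<And>j. 3 \<le> j \<Longrightarrow> j + 1 \<le> n \<Longrightarrow> \<not> sh (v 1) (v j)"
  shows False
proof -
  define g where "g j = D (v 0) (v j) - D (v 1) (v j)" for j
  have step: "g j \<le> g (Suc j)" if j: "2 \<le> j" "j + 2 \<le> n" for j
  proof -
    have a1: "D (v 0) (v 1) < D (v 0) (v j)" using cmp[OF s01 n0[OF j]] .
    have a2: "D (v j) (v (Suc j)) < D (v 1) (v (Suc j))"
      using cmp[OF sj[OF j] n1[of "Suc j"]] j by simp
    have "D (v 0) (v j) + D (v 1) (v (Suc j)) \<le> D (v 0) (v (Suc j)) + D (v 1) (v j)"
      using fpc[OF j] a1 a2 by (simp add: max_def split: if_splits)
    then show ?thesis unfolding g_def by simp
  qed
  have mono: "g 2 \<le> g (2 + k)" if "2 + k + 1 \<le> n" for k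
    using that
  proof (induction k)
    case 0 then show ?case by simp
  next
    case (Suc k)
    then have "g 2 \<le> g (2 + k)" by simp
    also have "\<dots> \<le> g (Suc (2 + k))" using step[of "2 + k"] Suc.prems by simp
    finally show ?case by simp
  qed
  have "g 2 \<le> g (2 + (n - 3))" using mono[of "n - 3"] n4 by simp
  moreover have "2 + (n - 3) = n - 1" using n4 by simp
  ultimately have le: "g 2 \<le> g (n - 1)" by simp
  have "D (v 1) (v 2) < D (v 0) (v 2)" using cmp[OF s12 n0[of 2]] n4 by simp
  then have "0 < g 2" unfolding g_def by simp
  moreover have "D (v 0) (v (n-1)) < D (v 1) (v (n-1))" using cmp[OF slast n1[of "n-1"]] n4 by simp
  then have "g (n - 1) < 0" unfolding g_def by simp
  ultimately show False using le by simp
qed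

lemma seg_cycle:
  assumes C: "is_cycle S cy" and ij: "i + 2 \<le> j" and jn: "j < length cy" and e: "{cy!j, cy!i} \<in> S"
  shows "is_cycle S (drop i (take (Suc j) cy)) \<and> length (drop i (take (Suc j) cy)) = Suc j - i"
proof -
  define c where "c = drop i (take (Suc j) cy)"
  have len: "length c = Suc j - i" unfolding c_def using jn by simp
  have d: "distinct cy" and ce: "set (consec_edges cy) \<subseteq> S" using C by (auto simp: is_cycle_def)
  have "i < length (take (Suc j) cy)" using ij jn by simp
  then have h: "hd c = cy ! i" unfolding c_def using ij by (simp add: hd_drop_conv_nth)
  have tl: "take (Suc j) cy \<noteq> []" "length (take (Suc j) cy) = Suc j" using jn by auto
  have "last c = last (take (Suc j) cy)" unfolding c_def using ij jn by simp
  also have "\<dots> = take (Suc j) cy ! j" using last_conv_nth[OF tl(1)] tl(2) by simp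
  also have "\<dots> = cy ! j" by simp
  finally have l: "last c = cy ! j" .
  have "is_cycle S c"
    unfolding is_cycle_def
  proof (intro conjI)
    show "3 \<le> length c" using len ij by simp
    show "distinct c" unfolding c_def using d by simp
    show "set (consec_edges c) \<subseteq> S" unfolding c_def using ce ce_drop ce_take by blast
    show "{last c, hd c} \<in> S" using e h l by simp
  qed
  then show ?thesis using len unfolding c_def by simp
qed

lemma H3_E_iff: "{(c,s,i),(c',s',i')} \<in> H3_E \<longleftrightarrow> c = c' \<and> s' = (\<not> s) \<and> c < 3 \<and> i < 4 \<and> i' < 4"
proof
  assume "{(c,s,i),(c',s',i')} \<in> H3_E"
  then obtain c0 s0 i0 j0 where e: "{(c,s,i),(c',s',i')} = {(c0, s0, i0), (c0, \<not> s0, j0)}"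
    "c0 < 3" "i0 < 4" "j0 < 4" unfolding H3_E_def by blast
  then show "c = c' \<and> s' = (\<not> s) \<and> c < 3 \<and> i < 4 \<and> i' < 4" by (auto simp: doubleton_eq_iff)
next
  assume "c = c' \<and> s' = (\<not> s) \<and> c < 3 \<and> i < 4 \<and> i' < 4"
  then show "{(c,s,i),(c',s',i')} \<in> H3_E" unfolding H3_E_def by blast
qed

lemma H3_V_iff: "(c,s,i) \<in> H3_V \<longleftrightarrow> c < 3 \<and> i < 4"
  by (simp add: H3_V_def)



lemma main_abstract:
  fixes DD :: "nat \<Rightarrow> (nat \<times> bool \<times> nat) \<Rightarrow> (nat \<times> bool \<times> nat) \<Rightarrow> real" and II :: "nat \<Rightarrow> real set"
  assumes RI: "\<And>k. k \<in> {0,1} \<Longrightarrow> real_interval (II k)"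
    and SY: "\<And>k u v. k \<in> {0,1} \<Longrightarrow> u \<in> H3_V \<Longrightarrow> v \<in> H3_V \<Longrightarrow> DD k u v = DD k v u"
    and FP: "\<And>k a b c d. k \<in> {0,1} \<Longrightarrow> a \<in> H3_V \<Longrightarrow> b \<in> H3_V \<Longrightarrow> c \<in> H3_V \<Longrightarrow> d \<in> H3_V \<Longrightarrow>
              DD k a b + DD k c d \<le> max (DD k a c + DD k b d) (DD k a d + DD k b c)"
    and GIN: "\<And>k u v. k \<in> {0,1} \<Longrightarrow> u \<in> H3_V \<Longrightarrow> v \<in> H3_V \<Longrightarrow> u \<noteq> v \<Longrightarrow> {u,v} \<notin> H3_E \<Longrightarrow> DD k u v \<in> II k"
    and GOUT: "\<And>u v. u \<in> H3_V \<Longrightarrow> v \<in> H3_V \<Longrightarrow> u \<noteq> v \<Longrightarrow> {u,v} \<in> H3_E \<Longrightarrow> \<exists>k\<in>{0,1}. DD k u v \<notin> II k"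
  shows False
proof -
  define sh where "sh k u v \<longleftrightarrow> (\<forall>y\<in>II k. DD k u v < y)" for k u v
  define lg where "lg k u v \<longleftrightarrow> (\<forall>y\<in>II k. y < DD k u v)" for k u v
  have split: "sh k u v \<or> lg k u v" if k: "k \<in> {0,1}" and nI: "DD k u v \<notin> II k" for k u v
  proof (rule ccontr)
    assume "\<not> (sh k u v \<or> lg k u v)"
    then obtain y1 y2 where "y1 \<in> II k" "y2 \<in> II k" "y1 \<le> DD k u v" "DD k u v \<le> y2"
      unfolding sh_def lg_def by (auto simp: not_less)
    then have "DD k u v \<in> II k" using RI[OF k] unfolding real_interval_def by blast
    then show False using nI by simp
  qed
  have cmp: "DD k a b < DD k c d" if H1: "sh k a b" and H2: "\<not> sh k c d" for k a b c d
  proof -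
    obtain y where "y \<in> II k" "y \<le> DD k c d" using H2 unfolding sh_def by (auto simp: not_less)
    then show ?thesis using H1 unfolding sh_def by force
  qed
  have inI_nsh: "\<not> sh k u v" if "DD k u v \<in> II k" for k u v
    using that unfolding sh_def by blast
  have inI_nlg: "\<not> lg k u v" if "DD k u v \<in> II k" for k u v
    using that unfolding lg_def by blast
  define LongIn where "LongIn k c \<longleftrightarrow> (\<exists>s i j. i < 4 \<and> j < 4 \<and> lg k (c,s,i) (c,\<not>s,j))" for k c
  have LL: False if k: "k \<in> {0,1}" and c: "c1 < 3" "c2 < 3" "c1 \<noteq> c2" and L: "LongIn k c1" "LongIn k c2" for k c1 c2
  proof -
    obtain s i j where a: "i < 4" "j < 4" "lg k (c1,s,i) (c1,\<not>s,j)" using L(1) unfolding LongIn_def by blast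
    obtain s' i' j' where b: "i' < 4" "j' < 4" "lg k (c2,s',i') (c2,\<not>s',j')" using L(2) unfolding LongIn_def by blast
    define A where "A = (c1,s,i)"
    define X where "X = (c1,\<not>s,j)"
    define P where "P = (c2,s',i')"
    define Q where "Q = (c2,\<not>s',j')"
    have V: "A \<in> H3_V" "X \<in> H3_V" "P \<in> H3_V" "Q \<in> H3_V" unfolding A_def X_def P_def Q_def H3_V_iff
      using a b c by auto
    have cross: "DD k U R \<in> II k" if "U \<in> {A,X}" "R \<in> {P,Q}" for U R
    proof -
      have UV: "U \<in> H3_V" "R \<in> H3_V" using that V by auto
      have "fst U = c1" "fst R = c2" using that unfolding A_def X_def P_def Q_def by auto
      then have ne: "U \<noteq> R" using c by auto
      obtain u1 u2 u3 where U: "U = (u1,u2,u3)" by (cases U) auto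
      obtain r1 r2 r3 where R: "R = (r1,r2,r3)" by (cases R) auto
      have "u1 \<noteq> r1" using \<open>fst U = c1\<close> \<open>fst R = c2\<close> c U R by simp
      then have "{U,R} \<notin> H3_E" unfolding U R H3_E_iff by simp
      then show ?thesis using GIN[OF k UV ne] by simp
    qed
    have l1: "\<forall>y\<in>II k. y < DD k A X" using a(3) unfolding lg_def A_def X_def by blast
    have l2: "\<forall>y\<in>II k. y < DD k P Q" using b(3) unfolding lg_def P_def Q_def by blast
    have "DD k A P < DD k A X" "DD k A Q < DD k A X" using l1 cross by auto
    moreover have "DD k X Q < DD k P Q" "DD k X P < DD k P Q" using l2 cross by auto
    moreover have "DD k A X + DD k P Q \<le> max (DD k A P + DD k X Q) (DD k A Q + DD k X P)"
      using FP[OF k V(1) V(2) V(3) V(4)] .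
    ultimately show False by (simp add: max_def split: if_splits)
  qed
  obtain c where c: "c < 3" "\<not> LongIn 0 c" "\<not> LongIn 1 c"
  proof -
    have "\<exists>c<3. \<not> LongIn 0 c \<and> \<not> LongIn 1 c"
    proof (rule ccontr)
      assume "\<not> (\<exists>c<3. \<not> LongIn 0 c \<and> \<not> LongIn 1 c)"
      then have h: "\<And>c. c < 3 \<Longrightarrow> LongIn 0 c \<or> LongIn 1 c" by blast
      have n0: "\<not> (LongIn k 0 \<and> LongIn k 1)" if "k \<in> {0,1}" for k using LL[OF that, of 0 1] by auto
      have n1: "\<not> (LongIn k 0 \<and> LongIn k 2)" if "k \<in> {0,1}" for k using LL[OF that, of 0 2] by auto
      have n2: "\<not> (LongIn k 1 \<and> LongIn k 2)" if "k \<in> {0,1}" for k using LL[OF that, of 1 2] by auto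
      have "LongIn 0 0 \<or> LongIn 1 0" "LongIn 0 1 \<or> LongIn 1 1" "LongIn 0 2 \<or> LongIn 1 2" using h by auto
      then show False using n0[of 0] n0[of 1] n1[of 0] n1[of 1] n2[of 0] n2[of 1] by auto
    qed
    then show ?thesis using that by blast
  qed
  define Vc where "Vc = {c} \<times> (UNIV :: bool set) \<times> {0..<(4::nat)}"
  have VcV: "Vc \<subseteq> H3_V" unfolding Vc_def H3_V_def using c by auto
  have finVc: "finite Vc" unfolding Vc_def by simp
  have cardVc: "card Vc = 8" unfolding Vc_def by (simp add: card_cartesian_product)
  define S where "S k = {{u,v} | u v. u \<in> Vc \<and> v \<in> Vc \<and> u \<noteq> v \<and> sh k u v}" for k
  have shsym: "sh k u v \<longleftrightarrow> sh k v u" if "k \<in> {0,1}" "u \<in> H3_V" "v \<in> H3_V" for k u v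
    unfolding sh_def using SY[OF that] by simp
  have Smem: "a \<in> Vc \<and> b \<in> Vc \<and> a \<noteq> b \<and> sh k a b" if k: "k \<in> {0,1}" and e: "{a,b} \<in> S k" for k a b
  proof -
    obtain u v where uv: "{a,b} = {u,v}" "u \<in> Vc" "v \<in> Vc" "u \<noteq> v" "sh k u v" using e unfolding S_def by blast
    show ?thesis
    proof (cases "a = u")
      case True
      then have "b = v" using uv(1) uv(4) by (auto simp: doubleton_eq_iff)
      then show ?thesis using True uv by simp
    next
      case False
      then have "a = v" "b = u" using uv(1) by (auto simp: doubleton_eq_iff)
      then show ?thesis using uv shsym[OF k, of u v] VcV by auto
    qed
  qed
  have Sin: "{a,b} \<in> S k" if "a \<in> Vc" "b \<in> Vc" "a \<noteq> b" "sh k a b" for k a b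
    using that unfolding S_def by blast
  have sameside: "\<not> sh k u v" if k: "k \<in> {0,1}" and u: "u \<in> Vc" and v: "v \<in> Vc" and ne: "u \<noteq> v"
    and ss: "fst (snd u) = fst (snd v)" for k u v
  proof -
    obtain u1 u2 u3 where U: "u = (u1,u2,u3)" by (cases u) auto
    obtain v1 v2 v3 where W: "v = (v1,v2,v3)" by (cases v) auto
    have "{u,v} \<notin> H3_E" unfolding U W H3_E_iff using ss U W by simp
    then have "DD k u v \<in> II k" using GIN[OF k _ _ ne] u v VcV by blast
    then show ?thesis using inI_nsh by blast
  qed
  have acyc: "\<not> (\<exists>cy. is_cycle (S k) cy)" if k: "k \<in> {0,1}" for k
  proof
    assume "\<exists>cy. is_cycle (S k) cy"
    then obtain cy0 where "is_cycle (S k) cy0" by blast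
    then obtain cy where cy: "is_cycle (S k) cy" and cymin: "\<And>c'. is_cycle (S k) c' \<Longrightarrow> length cy \<le> length c'"
      using ex_has_least_nat[of "is_cycle (S k)" cy0 length] by blast
    define n where "n = length cy"
    have n3: "3 \<le> n" and dcy: "distinct cy" and ce: "set (consec_edges cy) \<subseteq> S k"
      and cl: "{last cy, hd cy} \<in> S k" using cy unfolding n_def is_cycle_def by auto
    have ne: "cy \<noteq> []" using n3 n_def by auto
    have edge: "a \<in> Vc \<and> b \<in> Vc \<and> a \<noteq> b \<and> sh k a b" if "a = cy ! i" "b = cy ! Suc i" "Suc i < n" for a b i
      using Smem[OF k] ce ce_mem[of i cy] that unfolding n_def by blast
    have hdl: "hd cy = cy ! 0" "last cy = cy ! (n - 1)" using ne unfolding n_def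
      by (simp_all add: hd_conv_nth last_conv_nth)
    have close: "cy ! (n-1) \<in> Vc \<and> cy ! 0 \<in> Vc \<and> cy ! (n-1) \<noteq> cy ! 0 \<and> sh k (cy ! (n-1)) (cy ! 0)"
      using Smem[OF k] cl hdl by simp
    have inVc: "cy ! i \<in> Vc" if "i < n" for i
    proof (cases "Suc i < n")
      case True then show ?thesis using edge by blast
    next
      case False then have "i = n - 1" using that by simp
      then show ?thesis using close by simp
    qed
    have inV: "cy ! i \<in> H3_V" if "i < n" for i using inVc[OF that] VcV by blast
    have shV: "sh k (cy ! i) (cy ! j) \<Longrightarrow> sh k (cy ! j) (cy ! i)" if "i < n" "j < n" for i j
      using shsym[OF k inV[OF that(1)] inV[OF that(2)]] by blast
    have dist: "cy ! i \<noteq> cy ! j" if "i < n" "j < n" "i \<noteq> j" for i j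
      using nth_eq_iff_index_eq[OF dcy, of i j] that unfolding n_def by simp
    show False
    proof (cases "n = 3")
      case True
      have s01: "sh k (cy!0) (cy!1)" using edge[OF refl refl, of 0] True by simp
      have s12: "sh k (cy!1) (cy!2)" using edge[OF refl refl, of 1] True by (simp add: numeral_2_eq_2)
      have s20: "sh k (cy!2) (cy!0)" using close True by simp
      have d01: "fst (snd (cy!0)) \<noteq> fst (snd (cy!1))"
        using sameside[OF k inVc[of 0] inVc[of 1] dist[of 0 1]] s01 True by auto
      have d12: "fst (snd (cy!1)) \<noteq> fst (snd (cy!2))"
        using sameside[OF k inVc[of 1] inVc[of 2] dist[of 1 2]] s12 True by auto
      have d20: "fst (snd (cy!2)) \<noteq> fst (snd (cy!0))"
        using sameside[OF k inVc[of 2] inVc[of 0] dist[of 2 0]] s20 True by auto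
      show False using d01 d12 d20 by auto
    next
      case False
      then have n4: "4 \<le> n" using n3 by simp
      define v where "v i = cy ! i" for i
      have chord: "\<not> sh k (cy ! i) (cy ! j)" if ij: "i \<in> {0,1}" "i + 2 \<le> j" "j < n" "\<not> (i = 0 \<and> j = n - 1)" for i j
      proof
        assume s: "sh k (cy ! i) (cy ! j)"
        have "i < n" using ij by simp
        then have "{cy ! j, cy ! i} \<in> S k"
          using Sin[OF inVc[OF ij(3)] inVc[OF \<open>i < n\<close>]] dist[OF ij(3) \<open>i < n\<close>] shV[OF \<open>i < n\<close> ij(3) s] ij by simp
        then have sc: "is_cycle (S k) (drop i (take (Suc j) cy)) \<and> length (drop i (take (Suc j) cy)) = Suc j - i"
          using seg_cycle[OF cy ij(2)] ij(3) unfolding n_def by blast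
        have "Suc j - i < n" using ij by auto
        then show False using cymin sc unfolding n_def by fastforce
      qed
      show False
      proof (rule hole[of n "sh k" "DD k" v])
        show "4 \<le> n" by fact
        show "\<And>a b c d. sh k a b \<Longrightarrow> \<not> sh k c d \<Longrightarrow> DD k a b < DD k c d" using cmp by blast
        show "DD k (v 0) (v j) + DD k (v 1) (v (Suc j))
                \<le> max (DD k (v 0) (v 1) + DD k (v j) (v (Suc j))) (DD k (v 0) (v (Suc j)) + DD k (v 1) (v j))"
          if j: "2 \<le> j" "j + 2 \<le> n" for j
        proof -
          have vV: "v 0 \<in> H3_V" "v 1 \<in> H3_V" "v j \<in> H3_V" "v (Suc j) \<in> H3_V"
            unfolding v_def using inV j by auto
          have "DD k (v j) (v 1) = DD k (v 1) (v j)" using SY[OF k vV(3) vV(2)] .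
          then show ?thesis using FP[OF k vV(1) vV(3) vV(2) vV(4)] by simp
        qed
        show "sh k (v 0) (v 1)" unfolding v_def using edge[OF refl refl, of 0] n4 by simp
        show "sh k (v 1) (v 2)" unfolding v_def using edge[OF refl refl, of 1] n4 by (simp add: numeral_2_eq_2)
        show "sh k (v j) (v (Suc j))" if "2 \<le> j" "j + 2 \<le> n" for j
          unfolding v_def using edge[OF refl refl, of j] that by simp
        have "n - 1 < n" "0 < n" using n4 by auto
        then show "sh k (v 0) (v (n - 1))" unfolding v_def using close shV by blast
        show "\<not> sh k (v 0) (v j)" if "2 \<le> j" "j + 2 \<le> n" for j
          unfolding v_def using chord[of 0 j] that by simp
        show "\<not> sh k (v 1) (v j)" if "3 \<le> j" "j + 1 \<le> n" for j
          unfolding v_def using chord[of 1 j] that by simp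
      qed
    qed
  qed
  have cardS: "card (S k) < 8" if k: "k \<in> {0,1}" for k
  proof -
    have "S k \<subseteq> all_pairs Vc" unfolding S_def all_pairs_def by blast
    moreover have "Vc \<noteq> {}" using cardVc by auto
    ultimately show ?thesis using forest_card[OF finVc _ acyc[OF k]] cardVc by simp
  qed
  define Hc where "Hc = (\<lambda>(i,j). {(c,True,i),(c,False,j)}) ` ({0..<(4::nat)} \<times> {0..<(4::nat)})"
  have cardHc: "card Hc = 16"
  proof -
    have "inj_on (\<lambda>(i,j). {(c,True,i),(c,False,j)}) ({0..<(4::nat)} \<times> {0..<(4::nat)})"
      by (auto simp: inj_on_def doubleton_eq_iff)
    then have "card Hc = card ({0..<(4::nat)} \<times> {0..<(4::nat)})" unfolding Hc_def by (rule card_image)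
    then show ?thesis by (simp add: card_cartesian_product)
  qed
  have cover: "Hc \<subseteq> S 0 \<union> S 1"
  proof
    fix e assume "e \<in> Hc"
    then obtain i j where ij: "i < 4" "j < 4" "e = {(c,True,i),(c,False,j)}" unfolding Hc_def by auto
    define u where "u = (c,True,i)"
    define x where "x = (c,False,j)"
    have uv: "u \<in> Vc" "x \<in> Vc" "u \<noteq> x" unfolding u_def x_def Vc_def using ij by auto
    have "{u,x} \<in> H3_E" unfolding u_def x_def H3_E_iff using ij c by simp
    then obtain k where k: "k \<in> {0,1}" "DD k u x \<notin> II k" using GOUT[of u x] uv VcV by blast
    have "\<not> lg k u x"
    proof
      assume "lg k u x"
      then have "i < 4 \<and> j < 4 \<and> lg k (c,True,i) (c,\<not>True,j)" using ij unfolding u_def x_def by simp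
      then have "LongIn k c" unfolding LongIn_def by blast
      then show False using c k by auto
    qed
    then have "sh k u x" using split[OF k] by blast
    then have "{u,x} \<in> S k" using Sin uv by blast
    then show "e \<in> S 0 \<union> S 1" using k ij(3) unfolding u_def x_def by auto
  qed
  have finS: "finite (S k)" for k
  proof -
    have "S k \<subseteq> all_pairs Vc" unfolding S_def all_pairs_def by blast
    then show ?thesis using finite_subset finite_all_pairs[OF finVc] by blast
  qed
  have "card Hc \<le> card (S 0 \<union> S 1)" using cover finS by (intro card_mono) auto
  also have "\<dots> \<le> card (S 0) + card (S 1)" by (rule card_Un_le)
  finally show False using cardHc cardS[of 0] cardS[of 1] by simp
qed



definition pcgm :: "'a set \<Rightarrow> 'a set set \<Rightarrow> ('a \<Rightarrow> 'a \<Rightarrow> real) \<Rightarrow> real set \<Rightarrow> bool" where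
  "pcgm V E D I \<longleftrightarrow> real_interval I \<and> (\<forall>u\<in>V. \<forall>v\<in>V. u \<noteq> v \<longrightarrow> ({u,v} \<in> E \<longleftrightarrow> D u v \<in> I))
    \<and> (\<forall>u\<in>V. \<forall>v\<in>V. D u v = D v u)
    \<and> (\<forall>a\<in>V. \<forall>b\<in>V. \<forall>c\<in>V. \<forall>d\<in>V. D a b + D c d \<le> max (D a c + D b d) (D a d + D b c))"

lemma pcg_metric': "is_PCG V E \<Longrightarrow> \<exists>D I. pcgm V E D I"
  unfolding pcgm_def by (rule pcg_metric)

theorem theorem12:
  shows "\<not> is_k_AND_PCG 2 H3_V H3_compl_E"
proof
  assume "is_k_AND_PCG 2 H3_V H3_compl_E"
  then have "\<exists>Es. (\<forall>i<(2::nat). is_PCG H3_V (Es i)) \<and> H3_compl_E = (\<Inter>i\<in>{..<(2::nat)}. Es i)"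
    unfolding is_k_AND_PCG_def .
  then obtain Es where H: "(\<forall>i<(2::nat). is_PCG H3_V (Es i)) \<and> H3_compl_E = (\<Inter>i\<in>{..<(2::nat)}. Es i)"
    by (rule exE)
  have PE: "\<forall>i<(2::nat). is_PCG H3_V (Es i)" using H by (rule conjunct1)
  have GE: "H3_compl_E = (\<Inter>i\<in>{..<(2::nat)}. Es i)" using H by (rule conjunct2)
  have "{..<2::nat} = {0,1}" by auto
  then have G: "H3_compl_E = Es 0 \<inter> Es 1" using GE by simp
  have "is_PCG H3_V (Es 0)" using PE[rule_format, of 0] by simp
  have "is_PCG H3_V (Es 1)" using PE[rule_format, of 1] by simp
  obtain D0 I0 where X0: "pcgm H3_V (Es 0) D0 I0"
    using pcg_metric'[OF \<open>is_PCG H3_V (Es 0)\<close>] by blast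
  have R0: "real_interval I0"
    and E0: "\<forall>u\<in>H3_V. \<forall>v\<in>H3_V. u \<noteq> v \<longrightarrow> ({u,v} \<in> Es 0 \<longleftrightarrow> D0 u v \<in> I0)"
    and S0: "\<forall>u\<in>H3_V. \<forall>v\<in>H3_V. D0 u v = D0 v u"
    and F0: "\<forall>a\<in>H3_V. \<forall>b\<in>H3_V. \<forall>c\<in>H3_V. \<forall>d\<in>H3_V. D0 a b + D0 c d \<le> max (D0 a c + D0 b d) (D0 a d + D0 b c)"
    using X0 unfolding pcgm_def by simp_all
  obtain D1 I1 where X1: "pcgm H3_V (Es 1) D1 I1"
    using pcg_metric'[OF \<open>is_PCG H3_V (Es 1)\<close>] by blast
  have R1: "real_interval I1"
    and E1: "\<forall>u\<in>H3_V. \<forall>v\<in>H3_V. u \<noteq> v \<longrightarrow> ({u,v} \<in> Es 1 \<longleftrightarrow> D1 u v \<in> I1)"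
    and S1: "\<forall>u\<in>H3_V. \<forall>v\<in>H3_V. D1 u v = D1 v u"
    and F1: "\<forall>a\<in>H3_V. \<forall>b\<in>H3_V. \<forall>c\<in>H3_V. \<forall>d\<in>H3_V. D1 a b + D1 c d \<le> max (D1 a c + D1 b d) (D1 a d + D1 b c)"
    using X1 unfolding pcgm_def by simp_all
  define DD where "DD k = (if k = (0::nat) then D0 else D1)" for k
  define II where "II k = (if k = (0::nat) then I0 else I1)" for k
  have inG: "{u,v} \<in> H3_compl_E \<longleftrightarrow> {u,v} \<notin> H3_E" if "u \<in> H3_V" "v \<in> H3_V" "u \<noteq> v" for u v
    unfolding H3_compl_E_def all_pairs_def using that by blast
  show False
  proof (rule main_abstract[of II DD])
    show "real_interval (II k)" if "k \<in> {0,1}" for k using that R0 R1 unfolding II_def by auto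
    show "DD k u v = DD k v u" if "k \<in> {0,1}" "u \<in> H3_V" "v \<in> H3_V" for k u v
      using that S0 S1 unfolding DD_def by auto
    show "DD k a b + DD k c d \<le> max (DD k a c + DD k b d) (DD k a d + DD k b c)"
      if "k \<in> {0,1}" "a \<in> H3_V" "b \<in> H3_V" "c \<in> H3_V" "d \<in> H3_V" for k a b c d
    proof (cases "k = 0")
      case True then show ?thesis using F0 that unfolding DD_def by simp
    next
      case False then show ?thesis using F1 that unfolding DD_def by simp
    qed
    show "DD k u v \<in> II k" if k: "k \<in> {0,1}" and uv: "u \<in> H3_V" "v \<in> H3_V" "u \<noteq> v" and nH: "{u,v} \<notin> H3_E" for k u v
    proof -
      have "{u,v} \<in> Es 0" "{u,v} \<in> Es 1" using inG[OF uv] nH G by auto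
      then have "D0 u v \<in> I0" "D1 u v \<in> I1" using E0 E1 uv by auto
      then show ?thesis unfolding DD_def II_def by simp
    qed
    show "\<exists>k\<in>{0,1}. DD k u v \<notin> II k" if uv: "u \<in> H3_V" "v \<in> H3_V" "u \<noteq> v" and H: "{u,v} \<in> H3_E" for u v
    proof -
      have "{u,v} \<notin> Es 0 \<inter> Es 1" using inG[OF uv] H G by auto
      then have "D0 u v \<notin> I0 \<or> D1 u v \<notin> I1" using E0 E1 uv by auto
      then show ?thesis unfolding DD_def II_def by auto
    qed
  qed
qed


end
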